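(* Let $m$ be an integer with $m \equiv 3 \pmod 4$ and $m \ge 3$, and let $n = 3^m - 1$. Then: (i) the ternary cyclic code $\mathcal{C}_{(0,3,m)}$ has length $n$ and dimension $n/2$, and the ternary cyclic code $\mathcal{C}_{(1,2,m)}$ has length $n$ and dimension $(n+2)/2$; (ii) the ternary cyclic code $\mathcal{C}_{(2,3,m)}$ has length $n$ and dimension $n/2$, and the ternary cyclic code $\mathcal{C}_{(0,1,m)}$ has length $n$ and dimension $(n+2)/2$.
   Context: Let $m \ge 2$ be an integer, $n = 3^m-1$, and let $\alpha$ be a primitive element of $\mathbb{F}_{3^m}$. For an integer $0 \le j \le n-1$ with $3$-adic expansion $j = \sum_{t=0}^{m-1} j_t 3^t$, $j_t \in \{0,1,2\}$, let $w_3(j) = \sum_{t=0}^{m-1} j_t$ (the $3$-weight of $j$). For distinct $i_1, i_2 \in \{0,1,2,3\}$ let $T_{(i_1,i_2,m)} = \{1 \le j \le n-1 : w_3(j) \equiv i_1 \text{ or } i_2 \pmod 4\}$ and $g_{(i_1,i_2,m)}(x) = \prod_{j \in T_{(i_1,i_2,m)}} (x - \alpha^j)$, which lies in $\mathbb{F}_3[x]$. $\mathcal{C}_{(i_1,i_2,m)}$ denotes the ternary cyclic code of length $n$ with generator polynomial $g_{(i_1,i_2,m)}(x)$, i.e. the ideal generated by $g_{(i_1,i_2,m)}(x)$ in $\mathbb{F}_3[x]/(x^n-1)$. *)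

theory Defs
  imports "HOL-Computational_Algebra.Polynomial"
begin

definition w3 :: "nat \<Rightarrow> nat \<Rightarrow> nat" where
  "w3 m j = (\<Sum>t<m. (j div 3 ^ t) mod 3)"

definition T_set :: "nat \<Rightarrow> nat \<Rightarrow> nat \<Rightarrow> nat set" where
  "T_set i1 i2 m = {j. 1 \<le> j \<and> j \<le> (3 ^ m - 1) - 1 \<and>
                       (w3 m j mod 4 = i1 \<or> w3 m j mod 4 = i2)}"

definition primitive_element :: "'a::field \<Rightarrow> bool" where
  "primitive_element \<alpha> \<longleftrightarrow> (\<forall>x. x \<noteq> 0 \<longrightarrow> (\<exists>j. x = \<alpha> ^ j))"

definition gen_poly :: "'a::field \<Rightarrow> nat \<Rightarrow> nat \<Rightarrow> nat \<Rightarrow> 'a poly" where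
  "gen_poly \<alpha> i1 i2 m = (\<Prod>j\<in>T_set i1 i2 m. [:- (\<alpha> ^ j), 1:])"

(* the prime subfield F_3 inside a field of characteristic 3 is the image of of_nat;
   a polynomial lies in F_3[x] iff all its coefficients lie there *)
definition prime_subfield_poly :: "'a::field poly \<Rightarrow> bool" where
  "prime_subfield_poly p \<longleftrightarrow> (\<forall>i. coeff p i \<in> range of_nat)"

(* The cyclic code of length n generated by g: the ideal (g) in F_3[x]/(x^n - 1),
   elements represented by their canonical representatives of degree < n. *)
definition cyclic_code :: "nat \<Rightarrow> 'a::field poly \<Rightarrow> 'a poly set" where
  "cyclic_code n g = {c. prime_subfield_poly c \<and>
      (\<exists>q. prime_subfield_poly q \<and> c = (q * g) mod (monom 1 n - 1))}"

(* A ternary linear code C has length n (codewords are residues mod x^n - 1, i.e.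
   polynomials of degree < n) and dimension k, i.e. |C| = 3^k. *)
definition ternary_code_params :: "'a::field poly set \<Rightarrow> nat \<Rightarrow> nat \<Rightarrow> bool" where
  "ternary_code_params C n k \<longleftrightarrow>
     (\<forall>c\<in>C. c = 0 \<or> degree c < n) \<and> finite C \<and> card C = 3 ^ k"

end

theory Submission
  imports Defs
begin

lemma card_times_zero:
  fixes x :: "'a::{field,finite}"
  shows "of_nat (card (UNIV::'a set)) * x = 0"
proof -
  have "(\<Sum>y\<in>UNIV. x + y) = (\<Sum>y\<in>UNIV. y)"
    by (rule sum.reindex_bij_witness[of _ "\<lambda>y. y - x" "\<lambda>y. x + y"]) auto
  then have "of_nat (card (UNIV::'a set)) * x + (\<Sum>y\<in>UNIV. y) = (\<Sum>y\<in>UNIV. y)"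
    by (simp add: sum.distrib)
  then show ?thesis by simp
qed

lemma char3:
  assumes "card (UNIV :: 'a::{field,finite} set) = 3 ^ m" "m \<ge> 1"
  shows "(3::'a) = 0"
proof -
  have "of_nat (3^m) * (1::'a) = 0" using card_times_zero[of "1::'a"] assms by simp
  then have "(3::'a)^m = 0" by simp
  then show ?thesis by simp
qed

lemma fermat:
  fixes x :: "'a::{field,finite}"
  assumes "x \<noteq> 0"
  shows "x ^ (card (UNIV::'a set) - 1) = 1"
proof -
  let ?U = "UNIV - {0::'a}"
  have "(\<Prod>y\<in>?U. x * y) = (\<Prod>y\<in>?U. y)"
    by (rule prod.reindex_bij_witness[of _ "\<lambda>y. y / x" "\<lambda>y. x * y"]) (use assms in auto)
  then have "x ^ card ?U * (\<Prod>y\<in>?U. y) = 1 * (\<Prod>y\<in>?U. y)"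
    by (simp add: prod.distrib)
  moreover have "(\<Prod>y\<in>?U. y) \<noteq> 0" by simp
  ultimately have "x ^ card ?U = 1" by (metis mult_cancel_right)
  moreover have "card ?U = card (UNIV::'a set) - 1" by (simp add: card_Diff_singleton)
  ultimately show ?thesis by simp
qed

lemma cube_add:
  fixes a b :: "'a::field"
  assumes "(3::'a) = 0"
  shows "(a + b)^3 = a^3 + b^3"
proof -
  have "(a+b)^3 = a^3 + b^3 + 3 * (a*a*b + a*b*b)" by (simp add: power3_eq_cube algebra_simps)
  then show ?thesis using assms by simp
qed

lemma cube_sum:
  fixes f :: "nat \<Rightarrow> 'a::field"
  assumes "(3::'a) = 0"
  shows "(\<Sum>i\<in>A. f i)^3 = (\<Sum>i\<in>A. (f i)^3)"
proof (induction A rule: infinite_finite_induct)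
  case (insert x F)
  then show ?case by (simp add: cube_add[OF assms])
qed auto

definition frob :: "'a::field poly \<Rightarrow> 'a poly" where
  "frob p = map_poly (\<lambda>c. c^3) p"

lemma coeff_frob: "coeff (frob p) i = (coeff p i)^3"
  unfolding frob_def by (simp add: coeff_map_poly)

lemma frob_mult:
  fixes p q :: "'a::field poly"
  assumes "(3::'a) = 0"
  shows "frob (p * q) = frob p * frob q"
  by (rule poly_eqI) (simp add: coeff_frob coeff_mult cube_sum[OF assms] power_mult_distrib)

lemma frob_1: "frob 1 = 1"
  unfolding frob_def by simp

lemma frob_prod:
  fixes f :: "nat \<Rightarrow> 'a::field poly"
  assumes "(3::'a) = 0"
  shows "frob (\<Prod>i\<in>A. f i) = (\<Prod>i\<in>A. frob (f i))"
proof (induction A rule: infinite_finite_induct)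
  case (insert x F)
  then show ?case by (simp add: frob_mult[OF assms])
qed (auto simp: frob_1)

lemma frob_lin:
  fixes a :: "'a::field"
  shows "frob [:-a, 1:] = [:-(a^3), 1:]"
  unfolding frob_def by (simp add: map_poly_pCons)

lemma cube_eq_iff:
  fixes c :: "'a::field"
  assumes "(3::'a) = 0"
  shows "c^3 = c \<longleftrightarrow> c \<in> range of_nat"
proof
  assume h: "c^3 = c"
  have "c * (c - 1) * (c + 1) = c^3 - c" by (simp add: power3_eq_cube algebra_simps)
  then have "c * (c - 1) * (c + 1) = 0" using h by simp
  then have "c = 0 \<or> c = 1 \<or> c = -1" by (auto simp: eq_neg_iff_add_eq_0)
  moreover have "(-1::'a) = of_nat 2"
  proof -
    have "(of_nat 2::'a) + 1 = 3" by simp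
    then show ?thesis using assms by (simp add: eq_neg_iff_add_eq_0)
  qed
  ultimately show "c \<in> range of_nat"
    by (metis of_nat_0 of_nat_1 rangeI)
next
  assume "c \<in> range of_nat"
  then obtain k where k: "c = of_nat k" by auto
  have k3: "(of_nat k::'a) = of_nat (k mod 3)"
  proof -
    have "(of_nat k::'a) = of_nat (3 * (k div 3)) + of_nat (k mod 3)"
      by (metis of_nat_add div_mult_mod_eq mult.commute)
    also have "of_nat (3 * (k div 3)) = (3::'a) * of_nat (k div 3)" by simp
    finally show ?thesis using assms by simp
  qed
  have "k mod 3 = 0 \<or> k mod 3 = 1 \<or> k mod 3 = 2" by auto
  have "(8::'a) = 2"
  proof -
    have "(8::'a) = 2 + 2 * 3" by simp
    then show ?thesis using assms by simp
  qed
  moreover have "(2::'a)^3 = 8" by simp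
  ultimately have two: "(2::'a)^3 = 2" by simp
  show "c^3 = c" using k k3 \<open>k mod 3 = 0 \<or> k mod 3 = 1 \<or> k mod 3 = 2\<close> two by auto
qed

lemma psp_iff_frob:
  fixes p :: "'a::field poly"
  assumes "(3::'a) = 0"
  shows "prime_subfield_poly p \<longleftrightarrow> frob p = p"
  unfolding prime_subfield_poly_def
  by (metis cube_eq_iff[OF assms] coeff_frob poly_eqI)

lemma psp_mult:
  fixes p q :: "'a::field poly"
  assumes "(3::'a) = 0" "prime_subfield_poly p" "prime_subfield_poly q"
  shows "prime_subfield_poly (p * q)"
  using assms by (simp add: psp_iff_frob frob_mult)

lemma psp_div:
  fixes g c :: "'a::field poly"
  assumes "(3::'a) = 0" "prime_subfield_poly g" "prime_subfield_poly c" "g \<noteq> 0" "g dvd c"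
  shows "prime_subfield_poly (c div g)"
proof -
  obtain r where r: "c = g * r" using assms(5) by blast
  have "frob c = frob g * frob r" using r frob_mult[OF assms(1)] by simp
  then have "g * r = g * frob r" using assms r by (simp add: psp_iff_frob)
  then have "frob r = r" using assms(4) by simp
  then show ?thesis using r assms(4) by (simp add: psp_iff_frob[OF assms(1)])
qed

lemma K_eq:
  assumes "(3::'a::field) = 0"
  shows "range (of_nat :: nat \<Rightarrow> 'a) = {0, 1, 2}" "card (range (of_nat :: nat \<Rightarrow> 'a)) = 3"
proof -
  have k3: "(of_nat k::'a) = of_nat (k mod 3)" for k
  proof -
    have "(of_nat k::'a) = of_nat (3 * (k div 3) + k mod 3)" by simp
    also have "\<dots> = of_nat (3 * (k div 3)) + of_nat (k mod 3)" by (rule of_nat_add)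
    also have "of_nat (3 * (k div 3)) = (3::'a) * of_nat (k div 3)" by simp
    finally show ?thesis using assms by simp
  qed
  show r: "range (of_nat :: nat \<Rightarrow> 'a) = {0, 1, 2}"
  proof
    show "range (of_nat :: nat \<Rightarrow> 'a) \<subseteq> {0, 1, 2}"
    proof
      fix c assume "c \<in> range (of_nat :: nat \<Rightarrow> 'a)"
      then obtain k where "c = of_nat k" by auto
      moreover have "k mod 3 = 0 \<or> k mod 3 = 1 \<or> k mod 3 = 2" by auto
      ultimately show "c \<in> {0,1,2}" using k3[of k] by auto
    qed
    show "{0, 1, 2} \<subseteq> range (of_nat :: nat \<Rightarrow> 'a)"
    proof -
      have "of_nat 0 \<in> range (of_nat :: nat \<Rightarrow> 'a)" "of_nat 1 \<in> range (of_nat :: nat \<Rightarrow> 'a)"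
        "of_nat 2 \<in> range (of_nat :: nat \<Rightarrow> 'a)" by (rule rangeI)+
      then show ?thesis by simp
    qed
  qed
  have "(2::'a) \<noteq> 0"
  proof
    assume "(2::'a) = 0"
    moreover have "(3::'a) = 2 + 1" by simp
    ultimately have "(3::'a) = 1" by simp
    then show False using assms by simp
  qed
  moreover have "(2::'a) \<noteq> 1"
  proof
    assume "(2::'a) = 1"
    moreover have "(3::'a) = 2 + 1" by simp
    ultimately have "(3::'a) = 1 + 1" by simp
    then have "(3::'a) = 2" by simp
    then show False using assms \<open>(2::'a) \<noteq> 0\<close> by simp
  qed
  ultimately show "card (range (of_nat :: nat \<Rightarrow> 'a)) = 3" unfolding r by simp
qed

lemma card_small_polys:
  fixes k :: nat
  assumes "(3::'a::field) = 0"
  shows "card {r :: 'a poly. prime_subfield_poly r \<and> (r = 0 \<or> degree r < k)} = 3 ^ k"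
proof -
  let ?K = "range (of_nat :: nat \<Rightarrow> 'a)"
  let ?S = "{r :: 'a poly. prime_subfield_poly r \<and> (r = 0 \<or> degree r < k)}"
  let ?L = "{xs. set xs \<subseteq> ?K \<and> length xs = k}"
  have "bij_betw (\<lambda>p. map (coeff p) [0..<k]) ?S ?L"
  proof (rule bij_betw_imageI)
    show "inj_on (\<lambda>p. map (coeff p) [0..<k]) ?S"
    proof (rule inj_onI)
      fix p q assume p: "p \<in> ?S" and q: "q \<in> ?S" and e: "map (coeff p) [0..<k] = map (coeff q) [0..<k]"
      show "p = q"
      proof (rule poly_eqI)
        fix i
        show "coeff p i = coeff q i"
        proof (cases "i < k")
          case True
          have "\<forall>x\<in>{0..<k}. coeff p x = coeff q x" using e by simp
          then show ?thesis using True by simp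
        next
          case False
          then have "coeff p i = 0" using p by (auto intro: coeff_eq_0)
          moreover have "coeff q i = 0" using q False by (auto intro: coeff_eq_0)
          ultimately show ?thesis by simp
        qed
      qed
    qed
    show "(\<lambda>p. map (coeff p) [0..<k]) ` ?S = ?L"
    proof
      show "(\<lambda>p. map (coeff p) [0..<k]) ` ?S \<subseteq> ?L"
      proof
        fix ys assume "ys \<in> (\<lambda>p. map (coeff p) [0..<k]) ` ?S"
        then obtain p where p: "p \<in> ?S" and ys: "ys = map (coeff p) [0..<k]" by blast
        have "\<forall>i. coeff p i \<in> ?K" using p unfolding prime_subfield_poly_def by blast
        then have "set ys \<subseteq> ?K" unfolding ys by (simp only: set_map) blast
        moreover have "length ys = k" unfolding ys by simp
        ultimately show "ys \<in> ?L" by blast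
      qed
      show "?L \<subseteq> (\<lambda>p. map (coeff p) [0..<k]) ` ?S"
      proof
        fix xs assume xs: "xs \<in> ?L"
        have mx: "map (coeff (Poly xs)) [0..<k] = xs"
          using xs by (auto intro!: nth_equalityI simp: nth_default_def)
        have PS: "Poly xs \<in> ?S"
        proof -
          have "coeff (Poly xs) i \<in> ?K" for i
          proof (cases "i < length xs")
            case True
            then have "coeff (Poly xs) i = xs ! i" by (simp add: nth_default_def)
            moreover have "xs ! i \<in> set xs" using True by simp
            moreover have "set xs \<subseteq> ?K" using xs by simp
            ultimately have "xs ! i \<in> ?K" by (meson subsetD)
            then show ?thesis using \<open>coeff (Poly xs) i = xs ! i\<close> by simp
          next
            case False
            then have "coeff (Poly xs) i = of_nat 0" by (simp add: nth_default_def)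
            then show ?thesis by (metis rangeI)
          qed
          moreover have "Poly xs = 0 \<or> degree (Poly xs) < k"
          proof (cases "Poly xs = 0")
            case False
            have "Suc (degree (Poly xs)) = length (coeffs (Poly xs))"
              using False by (rule length_coeffs_degree[symmetric])
            also have "\<dots> \<le> length xs" by (simp add: length_strip_while_le)
            finally have "degree (Poly xs) < length xs" by simp
            then show ?thesis using xs by auto
          qed auto
          ultimately show ?thesis unfolding prime_subfield_poly_def by blast
        qed
        show "xs \<in> (\<lambda>p. map (coeff p) [0..<k]) ` ?S" using image_eqI[of xs "\<lambda>p. map (coeff p) [0..<k]" "Poly xs" ?S, OF mx[symmetric] PS] .
      qed
    qed
  qed
  then have "card ?S = card ?L" by (rule bij_betw_same_card)
  also have "\<dots> = 3 ^ k" using card_lists_length_eq[of ?K k] K_eq[OF assms] by simp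
  finally show ?thesis .
qed

lemma degree_xn1: "n \<ge> 1 \<Longrightarrow> degree (monom (1::'a::field) n - 1) = n"
proof -
  assume "n \<ge> 1"
  have "degree (monom (1::'a) n + (- 1)) = degree (monom (1::'a) n)"
    by (rule degree_add_eq_left) (use \<open>n \<ge> 1\<close> in \<open>simp add: degree_monom_eq\<close>)
  then show ?thesis by (simp add: degree_monom_eq)
qed

lemma code_params:
  fixes g :: "'a::field poly"
  assumes c3: "(3::'a) = 0" and pg: "prime_subfield_poly g" and mg: "lead_coeff g = 1"
    and gd: "g dvd (monom 1 n - 1)" and n1: "n \<ge> 1"
  shows "ternary_code_params (cyclic_code n g) n (n - degree g)"
proof -
  define f :: "'a poly" where "f = monom 1 n - 1"
  have df: "degree f = n" using degree_xn1[OF n1] f_def by simp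
  have f0: "f \<noteq> 0" using df n1 by auto
  have g0: "g \<noteq> 0" using mg by auto
  have gf: "g dvd f" using gd f_def by simp
  have dg: "degree g \<le> n" using dvd_imp_degree_le[OF gf f0] df by simp
  define S where "S = {r :: 'a poly. prime_subfield_poly r \<and> (r = 0 \<or> degree r < n - degree g)}"
  have eq: "cyclic_code n g = (\<lambda>r. g * r) ` S"
  proof
    show "cyclic_code n g \<subseteq> (\<lambda>r. g * r) ` S"
    proof
      fix c assume "c \<in> cyclic_code n g"
      then obtain q where pc: "prime_subfield_poly c" and cq: "c = (q * g) mod f"
        unfolding cyclic_code_def f_def by auto
      have "g dvd c" unfolding cq by (rule dvd_mod) (use gf in auto)
      then obtain r where cr: "c = g * r" by blast
      have rdiv: "r = c div g" using cr g0 by simp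
      have pr: "prime_subfield_poly r" unfolding rdiv by (rule psp_div[OF c3 pg pc g0 \<open>g dvd c\<close>])
      have "r = 0 \<or> degree r < n - degree g"
      proof (cases "r = 0")
        case False
        then have "c \<noteq> 0" using cr g0 by simp
        then have "degree c < n" using degree_mod_less[OF f0, of "q*g"] cq df by auto
        moreover have "degree c = degree g + degree r" using cr g0 False by (simp add: degree_mult_eq)
        ultimately show ?thesis by auto
      qed simp
      then show "c \<in> (\<lambda>r. g * r) ` S" using cr pr S_def by auto
    qed
    show "(\<lambda>r. g * r) ` S \<subseteq> cyclic_code n g"
    proof
      fix c assume "c \<in> (\<lambda>r. g * r) ` S"
      then obtain r where rS: "r \<in> S" and cr: "c = g * r" by auto
      have pr: "prime_subfield_poly r" using rS S_def by auto
      have pc: "prime_subfield_poly c" using psp_mult[OF c3 pg pr] cr by simp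
      have "(r * g) mod f = c"
      proof (cases "r = 0")
        case True then show ?thesis using cr by simp
      next
        case False
        then have "degree r < n - degree g" using rS S_def by auto
        then have "degree (r * g) < degree f" using False g0 df dg by (simp add: degree_mult_eq)
        then show ?thesis using cr by (simp add: mod_poly_less mult.commute)
      qed
      then show "c \<in> cyclic_code n g" using pc pr unfolding cyclic_code_def f_def by auto
    qed
  qed
  have inj: "inj_on (\<lambda>r. g * r) S" using g0 by (auto intro: inj_onI)
  have cardS: "card S = 3 ^ (n - degree g)" unfolding S_def by (rule card_small_polys[OF c3])
  have card: "card (cyclic_code n g) = 3 ^ (n - degree g)"
    unfolding eq using card_image[OF inj] cardS by simp
  have fin: "finite (cyclic_code n g)"
    using card by (metis card.infinite power_not_zero zero_neq_numeral)
  have deg: "\<forall>c\<in>cyclic_code n g. c = 0 \<or> degree c < n"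
  proof
    fix c assume "c \<in> cyclic_code n g"
    then obtain r where rS: "r \<in> S" and cr: "c = g * r" using eq by auto
    show "c = 0 \<or> degree c < n"
    proof (cases "r = 0")
      case False
      then have "degree r < n - degree g" using rS S_def by auto
      then show ?thesis using False g0 cr dg by (simp add: degree_mult_eq)
    qed (simp add: cr)
  qed
  show ?thesis unfolding ternary_code_params_def using card fin deg by simp
qed

lemma w3_Suc_low: "w3 (Suc k) x = x mod 3 + w3 k (x div 3)"
  unfolding w3_def
  by (simp add: sum.lessThan_Suc_shift div_mult2_eq del: sum.lessThan_Suc)

lemma digit_mod: "t < k \<Longrightarrow> (x mod 3 ^ k) div 3 ^ t mod 3 = (x::nat) div 3 ^ t mod 3"
proof -
  assume "t < k"
  then obtain d where d: "k = t + Suc d" by (metis add_Suc_right less_iff_Suc_add add.commute)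
  have "x mod 3 ^ k = 3^t * (x div 3^t mod 3^Suc d) + x mod 3^t"
    unfolding d power_add by (rule mod_mult2_eq)
  then have "(x mod 3 ^ k) div 3 ^ t = x div 3^t mod 3^Suc d" by simp
  then show ?thesis by (simp add: mod_mod_cancel)
qed

lemma w3_Suc_high: "w3 (Suc k) x = w3 k (x mod 3 ^ k) + (x div 3 ^ k) mod 3"
  unfolding w3_def by (simp add: digit_mod)

lemma w3_top: "w3 k (3 ^ k - 1) = 2 * k"
proof (induction k)
  case 0 then show ?case by (simp add: w3_def)
next
  case (Suc k)
  have e: "(3::nat) ^ Suc k - 1 = 2 + 3 * (3 ^ k - 1)"
  proof -
    have "(1::nat) \<le> 3 ^ k" by simp
    moreover have "(3::nat) ^ Suc k = 3 * 3 ^ k" by simp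
    ultimately show ?thesis by linarith
  qed
  have "(2 + 3 * q) mod 3 = (2::nat)" for q by presburger
  moreover have "(2 + 3 * q) div 3 = (q::nat)" for q by presburger
  ultimately show ?case unfolding e w3_Suc_low using Suc by simp
qed

definition hsh :: "nat \<Rightarrow> nat \<Rightarrow> nat" where
  "hsh k j = j div 3 ^ k + 3 * (j mod 3 ^ k)"

lemma hsh_props:
  assumes j: "j < 3 ^ Suc k"
  shows "w3 (Suc k) (hsh k j) = w3 (Suc k) j"
    and "3 * j = (3 ^ Suc k - 1) * (j div 3 ^ k) + hsh k j"
    and "1 \<le> j \<Longrightarrow> j \<le> 3 ^ Suc k - 2 \<Longrightarrow> 1 \<le> hsh k j \<and> hsh k j \<le> 3 ^ Suc k - 2"
proof -
  define P where "P = (3::nat) ^ k"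
  define a where "a = j div P"
  define b where "b = j mod P"
  have P1: "P \<ge> 1" unfolding P_def by simp
  have a3: "a < 3" using j unfolding a_def P_def by (simp add: less_mult_imp_div_less mult.commute)
  have bP: "b < P" unfolding b_def using P1 by simp
  have jab: "j = P * a + b" unfolding a_def b_def by simp
  have h: "hsh k j = a + 3 * b" unfolding hsh_def a_def b_def P_def by simp
  have "w3 (Suc k) (a + 3 * b) = a + w3 k b"
    unfolding w3_Suc_low using a3 by simp
  moreover have "w3 (Suc k) j = w3 k b + a"
    unfolding w3_Suc_high using a3 by (simp add: a_def b_def P_def)
  ultimately show "w3 (Suc k) (hsh k j) = w3 (Suc k) j" using h by simp
  have e3: "(3::nat) ^ Suc k = 3 * P" unfolding P_def by simp
  have "(3 * P - 1) * a + a = 3 * P * a"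
  proof -
    have "3 * P - 1 + 1 = 3 * P" using P1 by simp
    then show ?thesis by (metis add_mult_distrib mult_1)
  qed
  moreover have "3 * j = 3 * P * a + 3 * b" unfolding jab by (simp add: algebra_simps)
  ultimately show "3 * j = (3 ^ Suc k - 1) * (j div 3 ^ k) + hsh k j"
    unfolding e3 h using a_def P_def by simp
  assume j1: "1 \<le> j" and j2: "j \<le> 3 ^ Suc k - 2"
  have e: "(3::nat) ^ Suc k = 3 * P" unfolding P_def by simp
  have "a = 0 \<or> a = 1 \<or> a = 2" using a3 by auto
  then show "1 \<le> hsh k j \<and> hsh k j \<le> 3 ^ Suc k - 2"
    unfolding h e using j1 j2 bP unfolding e jab by auto
qed

lemma hsh_inj: "inj_on (hsh k) {j. j < 3 ^ Suc k}"
proof (rule inj_onI)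
  fix x y assume x: "x \<in> {j. j < 3 ^ Suc k}" and y: "y \<in> {j. j < 3 ^ Suc k}" and e: "hsh k x = hsh k y"
  have ax: "x div 3^k < 3" using x by (simp add: less_mult_imp_div_less mult.commute)
  have ay: "y div 3^k < 3" using y by (simp add: less_mult_imp_div_less mult.commute)
  have "(hsh k x) mod 3 = x div 3^k" using ax unfolding hsh_def by simp
  moreover have "(hsh k y) mod 3 = y div 3^k" using ay unfolding hsh_def by simp
  ultimately have d: "x div 3^k = y div 3^k" using e by simp
  then have "x mod 3^k = y mod 3^k" using e unfolding hsh_def by simp
  then show "x = y" using d by (metis div_mult_mod_eq)
qed

lemma T_sub: "T_set i1 i2 m \<subseteq> {1..3^m - 2}"
proof
  fix j assume "j \<in> T_set i1 i2 m"
  then have "1 \<le> j" "j \<le> 3 ^ m - 1 - 1" unfolding T_set_def by blast+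
  moreover have "(3::nat) ^ m - 1 - 1 = 3 ^ m - 2" by simp
  ultimately show "j \<in> {1..3^m - 2}" by simp
qed

lemma T_fin: "finite (T_set i1 i2 m)"
  by (rule finite_subset[OF T_sub]) simp

lemma hsh_T: "hsh k ` T_set i1 i2 (Suc k) = T_set i1 i2 (Suc k)"
proof -
  let ?T = "T_set i1 i2 (Suc k)"
  have lt: "j \<in> ?T \<Longrightarrow> j < 3 ^ Suc k" for j
  proof -
    assume "j \<in> ?T"
    then have "j \<in> {1..3 ^ Suc k - 2}" by (rule subsetD[OF T_sub])
    then have "j \<le> 3 ^ Suc k - 2" by simp
    moreover have "(3::nat) ^ Suc k \<ge> 1" by simp
    ultimately show ?thesis by linarith
  qed
  have sub: "hsh k ` ?T \<subseteq> ?T"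
  proof
    fix x assume "x \<in> hsh k ` ?T"
    then obtain j where jT: "j \<in> ?T" and x: "x = hsh k j" by auto
    have "j \<in> {1..3 ^ Suc k - 2}" using jT by (rule subsetD[OF T_sub])
    then have j1: "1 \<le> j" "j \<le> 3 ^ Suc k - 2" by simp_all
    have "1 \<le> x \<and> x \<le> 3 ^ Suc k - 2" using hsh_props(3)[OF lt[OF jT] j1] x by simp
    moreover have "w3 (Suc k) x = w3 (Suc k) j" using hsh_props(1)[OF lt[OF jT]] x by simp
    moreover have "w3 (Suc k) j mod 4 = i1 \<or> w3 (Suc k) j mod 4 = i2" using jT unfolding T_set_def by blast
    moreover have "(3::nat) ^ Suc k - 1 - 1 = 3 ^ Suc k - 2" by simp
    ultimately have "1 \<le> x" "x \<le> 3 ^ Suc k - 1 - 1" "w3 (Suc k) x mod 4 = i1 \<or> w3 (Suc k) x mod 4 = i2"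
      by simp_all
    then show "x \<in> ?T" unfolding T_set_def by blast
  qed
  have inj: "inj_on (hsh k) ?T" proof (rule inj_on_subset[OF hsh_inj[of k]])
    show "?T \<subseteq> {j. j < 3 ^ Suc k}" using lt by blast
  qed
  show ?thesis using endo_inj_surj[OF T_fin sub inj] .
qed

lemma gen_psp:
  fixes \<alpha> :: "'a::field"
  assumes c3: "(3::'a) = 0" and an: "\<alpha> ^ (3 ^ m - 1) = 1" and m1: "m \<ge> 1"
  shows "prime_subfield_poly (gen_poly \<alpha> i1 i2 m)"
proof -
  obtain k where m: "m = Suc k" using m1 by (cases m) auto
  let ?T = "T_set i1 i2 m"
  have lt: "j \<in> ?T \<Longrightarrow> j < 3 ^ Suc k" for j
  proof -
    assume "j \<in> ?T"
    then have "j \<in> {1..3 ^ Suc k - 2}" unfolding m by (rule subsetD[OF T_sub])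
    then have "j \<le> 3 ^ Suc k - 2" by simp
    moreover have "(3::nat) ^ Suc k \<ge> 1" by simp
    ultimately show ?thesis by linarith
  qed
  have "frob (gen_poly \<alpha> i1 i2 m) = (\<Prod>j\<in>?T. [:-((\<alpha>^j)^3), 1:])"
    unfolding gen_poly_def by (simp add: frob_prod[OF c3] frob_lin)
  also have "\<dots> = (\<Prod>j\<in>?T. [:-(\<alpha> ^ hsh k j), 1:])"
  proof (rule prod.cong[OF refl])
    fix j assume "j \<in> ?T"
    have "(\<alpha>^j)^3 = \<alpha> ^ (3 * j)" by (simp add: power_mult[symmetric] mult.commute)
    also have "\<dots> = (\<alpha> ^ (3 ^ Suc k - 1)) ^ (j div 3 ^ k) * \<alpha> ^ hsh k j"
      unfolding hsh_props(2)[OF lt[OF \<open>j \<in> ?T\<close>]] by (simp add: power_add power_mult)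
    also have "\<dots> = \<alpha> ^ hsh k j" using an m by simp
    finally show "[:-((\<alpha>^j)^3), 1:] = [:-(\<alpha> ^ hsh k j), 1:]" by simp
  qed
  also have "\<dots> = (\<Prod>j\<in>hsh k ` ?T. [:-(\<alpha> ^ j), 1:])"
  proof -
    have inj: "inj_on (hsh k) ?T" proof (rule inj_on_subset[OF hsh_inj[of k]])
    show "?T \<subseteq> {j. j < 3 ^ Suc k}" using lt by blast
  qed
    show ?thesis by (simp add: prod.reindex[OF inj])
  qed
  also have "\<dots> = gen_poly \<alpha> i1 i2 m" unfolding gen_poly_def m hsh_T ..
  finally show ?thesis using psp_iff_frob[OF c3] by simp
qed

lemma gen_monic: "lead_coeff (gen_poly (\<alpha>::'a::field) i1 i2 m) = 1"
  unfolding gen_poly_def by (simp add: lead_coeff_prod)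

lemma gen_degree: "degree (gen_poly (\<alpha>::'a::field) i1 i2 m) = card (T_set i1 i2 m)"
  unfolding gen_poly_def by (subst degree_prod_eq_sum_degree) auto

lemma prod_roots_dvd:
  fixes f :: "nat \<Rightarrow> 'a::field"
  assumes "finite A" "inj_on f A" "\<forall>a\<in>A. poly p (f a) = 0"
  shows "(\<Prod>a\<in>A. [:-(f a), 1:]) dvd p"
  using assms
proof (induction A rule: finite_induct)
  case empty then show ?case by simp
next
  case (insert x F)
  have "(\<Prod>a\<in>F. [:-(f a), 1:]) dvd p" using insert by (auto intro: inj_on_subset)
  then obtain r where r: "p = (\<Prod>a\<in>F. [:-(f a), 1:]) * r" by blast
  have "poly (\<Prod>a\<in>F. [:-(f a), 1:]) (f x) = (\<Prod>a\<in>F. f x - f a)" by (simp add: poly_prod)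
  moreover have "\<forall>a\<in>F. f x \<noteq> f a" using insert.prems(1) insert.hyps(2) by (auto simp: inj_on_def)
  ultimately have "poly (\<Prod>a\<in>F. [:-(f a), 1:]) (f x) \<noteq> 0" using insert.hyps(1) by simp
  moreover have "poly p (f x) = 0" using insert.prems by simp
  ultimately have "poly r (f x) = 0" using r by simp
  then have d: "[:-(f x), 1:] dvd r" by (simp add: poly_eq_0_iff_dvd)
  have eq: "(\<Prod>a\<in>insert x F. [:-(f a), 1:]) = [:-(f x), 1:] * (\<Prod>a\<in>F. [:-(f a), 1:])"
    by (rule prod.insert) (use insert.hyps in auto)
  have pr: "p = r * (\<Prod>a\<in>F. [:-(f a), 1:])" using r by (simp only: mult.commute)
  show ?case unfolding eq pr by (rule mult_dvd_mono[OF d dvd_refl])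
qed

lemma gen_dvd_aux:
  fixes \<alpha> :: "'a::field"
  assumes an: "\<alpha> ^ N = 1" and inj: "inj_on (\<lambda>j. \<alpha> ^ j) {..<N}" and TN: "T \<subseteq> {..<N}" and fT: "finite T"
  shows "(\<Prod>j\<in>T. [:-(\<alpha>^j), 1:]) dvd (monom 1 N - 1)"
proof (rule prod_roots_dvd[OF fT])
  show "inj_on (\<lambda>j. \<alpha> ^ j) T" using inj TN inj_on_subset by blast
  show "\<forall>a\<in>T. poly (monom 1 N - 1) (\<alpha> ^ a) = 0"
  proof
    fix a
    have "(\<alpha>^a)^N = (\<alpha>^N)^a" by (metis power_mult mult.commute)
    then have "(\<alpha>^a)^N = 1" using an by simp
    then show "poly (monom 1 N - 1) (\<alpha> ^ a) = 0" by (simp add: poly_monom)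
  qed
qed

lemma gen_dvd:
  fixes \<alpha> :: "'a::field"
  assumes an: "\<alpha> ^ (3 ^ m - 1) = 1" and inj: "inj_on (\<lambda>j. \<alpha> ^ j) {..<3^m - 1}"
  shows "gen_poly \<alpha> i1 i2 m dvd (monom 1 (3^m - 1) - 1)"
proof -
  have "T_set i1 i2 m \<subseteq> {..<3^m - 1}" using T_sub by fastforce
  then show ?thesis unfolding gen_poly_def using gen_dvd_aux[OF an inj _ T_fin] by blast
qed

lemma prim_facts:
  fixes \<alpha> :: "'a::{field,finite}"
  assumes cU: "card (UNIV :: 'a set) = 3 ^ m" and m1: "m \<ge> 1" and pr: "primitive_element \<alpha>"
  shows "\<alpha> ^ (3 ^ m - 1) = 1" "inj_on (\<lambda>j. \<alpha> ^ j) {..<3^m - 1}"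
proof -
  let ?n = "3 ^ m - 1 :: nat"
  have "(3::nat) ^ 1 \<le> 3 ^ m" by (rule power_increasing[OF m1]) simp
  then have cU3: "card (UNIV :: 'a set) \<ge> 3" using cU by simp
  have a0: "\<alpha> \<noteq> 0"
  proof
    assume "\<alpha> = 0"
    have "UNIV \<subseteq> {0, 1::'a}"
    proof
      fix x :: 'a
      show "x \<in> {0, 1}"
      proof (cases "x = 0")
        case False
        then obtain j where "x = \<alpha> ^ j" using pr unfolding primitive_element_def by blast
        then show ?thesis using \<open>\<alpha> = 0\<close> by (cases j) simp_all
      qed simp
    qed
    then have "card (UNIV :: 'a set) \<le> card {0, 1::'a}" by (rule card_mono[rotated]) simp
    then have "card (UNIV :: 'a set) \<le> 2" by simp
    then show False using cU3 by simp
  qed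
  show "\<alpha> ^ ?n = 1" using fermat[OF a0] cU by simp
  have cN: "card (UNIV - {0::'a}) = ?n" using cU by (simp add: card_Diff_singleton)
  have noone: "\<alpha> ^ k \<noteq> 1" if k: "0 < k" "k < ?n" for k
  proof
    assume ak: "\<alpha> ^ k = 1"
    have "UNIV - {0::'a} \<subseteq> (\<lambda>i. \<alpha> ^ i) ` {..<k}"
    proof
      fix x assume "x \<in> UNIV - {0::'a}"
      then have "x \<noteq> 0" by simp
      then obtain j where "x = \<alpha> ^ j" using pr unfolding primitive_element_def by blast
      also have "\<dots> = \<alpha> ^ (k * (j div k) + j mod k)" by simp
      also have "\<dots> = (\<alpha> ^ k) ^ (j div k) * \<alpha> ^ (j mod k)"
        by (simp only: power_add power_mult)
      also have "\<dots> = \<alpha> ^ (j mod k)" using ak by simp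
      finally have xe: "x = \<alpha> ^ (j mod k)" .
      have "j mod k \<in> {..<k}" using k by simp
      then show "x \<in> (\<lambda>i. \<alpha> ^ i) ` {..<k}" unfolding xe by (rule imageI)
    qed
    then have "card (UNIV - {0::'a}) \<le> card ((\<lambda>i. \<alpha> ^ i) ` {..<k})" by (rule card_mono[rotated]) simp
    also have "\<dots> \<le> k" using card_image_le[of "{..<k}" "\<lambda>i. \<alpha> ^ i"] by simp
    finally show False using cN k by simp
  qed
  show "inj_on (\<lambda>j. \<alpha> ^ j) {..<?n}"
  proof (rule inj_onI)
    fix i j assume i: "i \<in> {..<?n}" and j: "j \<in> {..<?n}" and e: "\<alpha> ^ i = \<alpha> ^ j"
    show "i = j"
    proof (rule ccontr)
      assume "i \<noteq> j"
      then consider "i < j" | "j < i" by linarith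
      then show False
      proof cases
        case 1
        have "\<alpha> ^ j = \<alpha> ^ i * \<alpha> ^ (j - i)" using 1 by (simp add: power_add[symmetric])
        then have "\<alpha> ^ (j - i) = 1" using e a0 by simp
        moreover have "0 < j - i" "j - i < ?n" using 1 j by auto
        ultimately show False using noone[of "j - i"] by blast
      next
        case 2
        have "\<alpha> ^ i = \<alpha> ^ j * \<alpha> ^ (i - j)" using 2 by (simp add: power_add[symmetric])
        then have "\<alpha> ^ (i - j) = 1" using e a0 by simp
        moreover have "0 < i - j" "i - j < ?n" using 2 i by auto
        ultimately show False using noone[of "i - j"] by blast
      qed
    qed
  qed
qed

definition cnt :: "nat \<Rightarrow> nat \<Rightarrow> nat" where
  "cnt m r = card {j. j < 3 ^ m \<and> w3 m j mod 4 = r}"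

lemma card_as_sum: "card {j. j < (N::nat) \<and> Q j} = (\<Sum>j<N. if Q j then 1 else 0)"
proof -
  have "{j. j < N \<and> Q j} = {j\<in>{..<N}. Q j}" by auto
  moreover have "card {j\<in>{..<N}. Q j} = (\<Sum>j\<in>{j\<in>{..<N}. Q j}. 1)" by (rule card_eq_sum)
  moreover have "(\<Sum>j\<in>{j\<in>{..<N}. Q j}. 1) = (\<Sum>j<N. if Q j then 1 else (0::nat))"
    by (rule sum.inter_filter) simp
  ultimately show ?thesis by simp
qed

lemma sum_split3: "(\<Sum>j<3*K. f j) = (\<Sum>j<K. f (3*j) + f (3*j+1) + f (3*j+2)) " for f :: "nat \<Rightarrow> nat"
proof (induction K)
  case (Suc K)
  have e: "3 * Suc K = Suc (Suc (Suc (3 * K)))" by simp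
  have "(\<Sum>j<3 * Suc K. f j) = (\<Sum>j<Suc (Suc (Suc (3 * K))). f j)" by (simp only: e)
  also have "\<dots> = (\<Sum>j<3*K. f j) + f (3*K) + f (3*K+1) + f (3*K+2)" by simp
  finally show ?case using Suc by simp
qed simp

lemma shift_mod4:
  fixes r w d :: nat
  assumes "r < 4" "d < 4"
  shows "((d + w) mod 4 = r) = (w mod 4 = (r + 4 - d) mod 4)"
proof -
  have e: "(d + w) mod 4 = (d + w mod 4) mod 4" by (simp add: mod_add_right_eq)
  have "w mod 4 < 4" by simp
  then have "w mod 4 \<in> {0,1,2,3}" by auto
  moreover have "r \<in> {0,1,2,3}" "d \<in> {0,1,2,3}" using assms by auto
  ultimately show ?thesis unfolding e by (auto dest: dvd_imp_le)
qed

lemma cnt_Suc: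
  assumes "r < 4"
  shows "cnt (Suc m) r = cnt m r + cnt m ((r + 3) mod 4) + cnt m ((r + 2) mod 4)"
proof -
  have w: "w3 (Suc m) (3*j + d) = d + w3 m j" if "d < 3" for j d
    unfolding w3_Suc_low using that by simp
  have "cnt (Suc m) r = (\<Sum>j<3 * 3^m. if w3 (Suc m) j mod 4 = r then 1 else 0)"
    unfolding cnt_def card_as_sum by simp
  also have "\<dots> = (\<Sum>j<3^m. (if w3 m j mod 4 = r then 1 else 0) + (if w3 m j mod 4 = (r+3) mod 4 then 1 else 0)
         + (if w3 m j mod 4 = (r+2) mod 4 then 1 else 0))"
    unfolding sum_split3
  proof (rule sum.cong[OF refl])
    fix j
    have a: "w3 (Suc m) (3*j) = w3 m j" using w[of 0 j] by simp
    have b: "w3 (Suc m) (3*j+1) = 1 + w3 m j" using w[of 1 j] by simp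
    have c: "w3 (Suc m) (3*j+2) = 2 + w3 m j" using w[of 2 j] by simp
    have b': "((1 + w3 m j) mod 4 = r) = (w3 m j mod 4 = (r+3) mod 4)" using shift_mod4[OF assms, of 1 "w3 m j"] by (simp add: add.commute)
    have c': "((2 + w3 m j) mod 4 = r) = (w3 m j mod 4 = (r+2) mod 4)" using shift_mod4[OF assms, of 2 "w3 m j"] by (simp add: add.commute)
    show "(if w3 (Suc m) (3 * j) mod 4 = r then 1 else 0) + (if w3 (Suc m) (3 * j + 1) mod 4 = r then 1 else 0) +
          (if w3 (Suc m) (3 * j + 2) mod 4 = r then 1 else 0) =
         (if w3 m j mod 4 = r then 1 else 0) + (if w3 m j mod 4 = (r + 3) mod 4 then 1 else 0) +
         (if w3 m j mod 4 = (r + 2) mod 4 then 1 else 0)"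
      unfolding a b c b' c' ..
  qed
  also have "\<dots> = cnt m r + cnt m ((r + 3) mod 4) + cnt m ((r + 2) mod 4)"
    unfolding cnt_def card_as_sum by (simp add: sum.distrib)
  finally show ?thesis .
qed

definition off :: "nat \<Rightarrow> nat \<Rightarrow> int" where
  "off s r = (if s = 0 then (if r = 0 then 3 else -1)
             else if s = 1 then (if r = 3 then -3 else 1)
             else if s = 2 then (if r = 2 then 3 else -1)
             else (if r = 1 then -3 else 1))"

lemma cnt_formula:
  "\<forall>r<4. 4 * int (cnt m r) = 3 ^ m + off (m mod 4) r"
proof (induction m)
  case 0
  have "cnt 0 r = (if r = 0 then 1 else 0)" for r
    unfolding cnt_def by (auto simp: w3_def)
  then show ?case by (auto simp: off_def)
next
  case (Suc m)
  have i0: "4 * int (cnt m 0) = 3 ^ m + off (m mod 4) 0" using Suc by simp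
  have i1: "4 * int (cnt m 1) = 3 ^ m + off (m mod 4) 1" using Suc by simp
  have i2: "4 * int (cnt m 2) = 3 ^ m + off (m mod 4) 2" using Suc by simp
  have i3: "4 * int (cnt m 3) = 3 ^ m + off (m mod 4) 3" using Suc by simp
  have ev: "(0+3) mod 4 = (3::nat)" "(0+2) mod 4 = (2::nat)" "(1+3) mod 4 = (0::nat)" "(1+2) mod 4 = (3::nat)"
    "(2+3) mod 4 = (1::nat)" "(2+2) mod 4 = (0::nat)" "(3+3) mod 4 = (2::nat)" "(3+2) mod 4 = (1::nat)"
    by simp_all
  have s0: "cnt (Suc m) 0 = cnt m 0 + cnt m 3 + cnt m 2" using cnt_Suc[of 0 m] unfolding ev by simp
  have s1: "cnt (Suc m) 1 = cnt m 1 + cnt m 0 + cnt m 3" using cnt_Suc[of 1 m] unfolding ev by simp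
  have s2: "cnt (Suc m) 2 = cnt m 2 + cnt m 1 + cnt m 0" using cnt_Suc[of 2 m] unfolding ev by simp
  have s3: "cnt (Suc m) 3 = cnt m 3 + cnt m 2 + cnt m 1" using cnt_Suc[of 3 m] unfolding ev by simp
  have p: "(3::int) ^ Suc m = 3 * 3 ^ m" by simp
  have A: "m mod 4 = 0 \<or> m mod 4 = 1 \<or> m mod 4 = 2 \<or> m mod 4 = 3" by auto
  consider "m mod 4 = 0" "Suc m mod 4 = 1" | "m mod 4 = 1" "Suc m mod 4 = 2"
    | "m mod 4 = 2" "Suc m mod 4 = 3" | "m mod 4 = 3" "Suc m mod 4 = 0" using A by (auto simp: mod_Suc)
  then have "4 * int (cnt (Suc m) 0) = 3 ^ Suc m + off (Suc m mod 4) 0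
     \<and> 4 * int (cnt (Suc m) 1) = 3 ^ Suc m + off (Suc m mod 4) 1
     \<and> 4 * int (cnt (Suc m) 2) = 3 ^ Suc m + off (Suc m mod 4) 2
     \<and> 4 * int (cnt (Suc m) 3) = 3 ^ Suc m + off (Suc m mod 4) 3"
  proof cases
    case 1
    have o: "off 0 0 = 3" "off 0 1 = - 1" "off 0 2 = - 1" "off 0 3 = - 1" "off 1 0 = 1" "off 1 1 = 1" "off 1 2 = 1" "off 1 3 = - 3" by (simp_all add: off_def)
    show ?thesis unfolding s0 s1 s2 s3 p of_nat_add distrib_left 1(2) using i0 i1 i2 i3 unfolding 1(1) o by linarith
  next
    case 2
    have o: "off 1 0 = 1" "off 1 1 = 1" "off 1 2 = 1" "off 1 3 = - 3" "off 2 0 = - 1" "off 2 1 = - 1" "off 2 2 = 3" "off 2 3 = - 1" by (simp_all add: off_def)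
    show ?thesis unfolding s0 s1 s2 s3 p of_nat_add distrib_left 2(2) using i0 i1 i2 i3 unfolding 2(1) o by linarith
  next
    case 3
    have o: "off 2 0 = - 1" "off 2 1 = - 1" "off 2 2 = 3" "off 2 3 = - 1" "off 3 0 = 1" "off 3 1 = - 3" "off 3 2 = 1" "off 3 3 = 1" by (simp_all add: off_def)
    show ?thesis unfolding s0 s1 s2 s3 p of_nat_add distrib_left 3(2) using i0 i1 i2 i3 unfolding 3(1) o by linarith
  next
    case 4
    have o: "off 3 0 = 1" "off 3 1 = - 3" "off 3 2 = 1" "off 3 3 = 1" "off 0 0 = 3" "off 0 1 = - 1" "off 0 2 = - 1" "off 0 3 = - 1" by (simp_all add: off_def)
    show ?thesis unfolding s0 s1 s2 s3 p of_nat_add distrib_left 4(2) using i0 i1 i2 i3 unfolding 4(1) o by linarith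
  qed
  then have cj: "4 * int (cnt (Suc m) 0) = 3 ^ Suc m + off (Suc m mod 4) 0
     \<and> 4 * int (cnt (Suc m) 1) = 3 ^ Suc m + off (Suc m mod 4) 1
     \<and> 4 * int (cnt (Suc m) 2) = 3 ^ Suc m + off (Suc m mod 4) 2
     \<and> 4 * int (cnt (Suc m) 3) = 3 ^ Suc m + off (Suc m mod 4) 3" .
  show ?case
  proof (intro allI impI)
    fix r :: nat assume "r < 4"
    then have "r = 0 \<or> r = 1 \<or> r = 2 \<or> r = 3" by auto
    then show "4 * int (cnt (Suc m) r) = 3 ^ Suc m + off (Suc m mod 4) r" using cj by auto
  qed
qed

lemma w3_zero: "w3 m 0 = 0" by (simp add: w3_def)

lemma card_T:
  assumes "i1 \<noteq> i2" "m \<ge> 1"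
  shows "card (T_set i1 i2 m) + (if i1 = 0 \<or> i2 = 0 then 1 else 0)
          + (if (2*m) mod 4 = i1 \<or> (2*m) mod 4 = i2 then 1 else 0) = cnt m i1 + cnt m i2"
proof -
  let ?N = "3 ^ m - 1 :: nat"
  define A where "A = {j. j < 3 ^ m \<and> (w3 m j mod 4 = i1 \<or> w3 m j mod 4 = i2)}"
  have "(3::nat) ^ 1 \<le> 3 ^ m" by (rule power_increasing[OF assms(2)]) simp
  then have N0: "?N \<noteq> 0" by simp
  have cA: "card A = cnt m i1 + cnt m i2"
  proof -
    have "A = {j. j < 3 ^ m \<and> w3 m j mod 4 = i1} \<union> {j. j < 3 ^ m \<and> w3 m j mod 4 = i2}"
      unfolding A_def by auto
    then show ?thesis unfolding cnt_def using assms(1) by (simp add: card_Un_disjoint disjoint_iff)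
  qed
  have TA: "T_set i1 i2 m = A - {0, ?N}" unfolding T_set_def A_def by auto
  have finA: "finite A" unfolding A_def by simp
  have "card A = card (T_set i1 i2 m) + card (A \<inter> {0, ?N})"
  proof -
    have f: "finite (A \<inter> {0, ?N})" by simp
    have "card (A - {0, ?N}) = card A - card (A \<inter> {0, ?N})" by (rule card_Diff_subset_Int[OF f])
    moreover have "card (A \<inter> {0, ?N}) \<le> card A" by (rule card_mono[OF finA]) blast
    ultimately show ?thesis unfolding TA by simp
  qed
  moreover have "card (A \<inter> {0, ?N}) = (if i1 = 0 \<or> i2 = 0 then 1 else 0)
          + (if (2*m) mod 4 = i1 \<or> (2*m) mod 4 = i2 then 1 else 0)"
  proof -
    have "A \<inter> {0, ?N} = (if i1 = 0 \<or> i2 = 0 then {0} else {}) \<union> (if (2*m) mod 4 = i1 \<or> (2*m) mod 4 = i2 then {?N} else {})"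
      unfolding A_def using w3_zero[of m] w3_top[of m] N0 by auto
    then show ?thesis using N0 by auto
  qed
  ultimately show ?thesis using cA by simp
qed

theorem theorem1:
  fixes \<alpha> :: "'a::{field, finite}" and m :: nat
  assumes "card (UNIV :: 'a set) = 3 ^ m"
    and "primitive_element \<alpha>"
    and "m mod 4 = 3" and "m \<ge> 3"
  defines "n \<equiv> 3 ^ m - 1"
  shows "ternary_code_params (cyclic_code n (gen_poly \<alpha> 0 3 m)) n (n div 2)
       \<and> ternary_code_params (cyclic_code n (gen_poly \<alpha> 1 2 m)) n ((n + 2) div 2)
       \<and> ternary_code_params (cyclic_code n (gen_poly \<alpha> 2 3 m)) n (n div 2)
       \<and> ternary_code_params (cyclic_code n (gen_poly \<alpha> 0 1 m)) n ((n + 2) div 2)"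
proof -
  have m1: "m \<ge> 1" using assms(4) by simp
  have c3: "(3::'a) = 0" by (rule char3[OF assms(1) m1])
  have an: "\<alpha> ^ (3 ^ m - 1) = 1" and inj: "inj_on (\<lambda>j. \<alpha> ^ j) {..<3^m - 1}"
    using prim_facts[OF assms(1) m1 assms(2)] by auto
  have "(3::nat) ^ 1 \<le> 3 ^ m" by (rule power_increasing[OF m1]) simp
  then have x3: "(3::nat) \<le> 3 ^ m" by simp
  have n1: "n \<ge> 1" unfolding n_def using x3 by simp
  have P: "ternary_code_params (cyclic_code n (gen_poly \<alpha> i1 i2 m)) n (n - card (T_set i1 i2 m))" for i1 i2
  proof -
    have "ternary_code_params (cyclic_code n (gen_poly \<alpha> i1 i2 m)) n (n - degree (gen_poly \<alpha> i1 i2 m))"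
      unfolding n_def
      by (rule code_params[OF c3 gen_psp[OF c3 an m1] gen_monic gen_dvd[OF an inj]]) (use n1 n_def in simp)
    then show ?thesis by (simp only: gen_degree)
  qed
  have F: "\<forall>r<4. 4 * int (cnt m r) = 3 ^ m + off (m mod 4) r" by (rule cnt_formula)
  have "4 * int (cnt m 0) = 3 ^ m + 1" using F assms(3) by (simp add: off_def)
  then have "int (4 * cnt m 0) = int (3 ^ m + 1)" by simp
  then have e0: "4 * cnt m 0 = 3 ^ m + 1" by (simp only: of_nat_eq_iff)
  have "4 * int (cnt m 1) = 3 ^ m - 3" using F assms(3) by (simp add: off_def)
  then have "int (4 * cnt m 1 + 3) = int (3 ^ m)" by simp
  then have e1: "4 * cnt m 1 + 3 = 3 ^ m" by (simp only: of_nat_eq_iff)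
  have "4 * int (cnt m 2) = 3 ^ m + 1" using F assms(3) by (simp add: off_def)
  then have "int (4 * cnt m 2) = int (3 ^ m + 1)" by simp
  then have e2: "4 * cnt m 2 = 3 ^ m + 1" by (simp only: of_nat_eq_iff)
  have "4 * int (cnt m 3) = 3 ^ m + 1" using F assms(3) by (simp add: off_def)
  then have "int (4 * cnt m 3) = int (3 ^ m + 1)" by simp
  then have e3: "4 * cnt m 3 = 3 ^ m + 1" by (simp only: of_nat_eq_iff)
  have m2: "(2 * m) mod 4 = 2" using assms(3) by presburger
  have t03: "card (T_set 0 3 m) + 1 = cnt m 0 + cnt m 3" using card_T[of 0 3 m] m1 m2 by simp
  have t12: "card (T_set 1 2 m) + 1 = cnt m 1 + cnt m 2" using card_T[of 1 2 m] m1 m2 by simp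
  have t23: "card (T_set 2 3 m) + 1 = cnt m 2 + cnt m 3" using card_T[of 2 3 m] m1 m2 by simp
  have t01: "card (T_set 0 1 m) + 1 = cnt m 0 + cnt m 1" using card_T[of 0 1 m] m1 m2 by simp
  define x where "x = (3::nat) ^ m"
  have nx: "n = x - 1" unfolding n_def x_def ..
  have h1: "2 * card (T_set 0 3 m) = n" using t03 e0 e3 nx x3 unfolding x_def[symmetric] by linarith
  have h2: "2 * card (T_set 1 2 m) + 2 = n" using t12 e1 e2 nx x3 unfolding x_def[symmetric] by linarith
  have h3: "2 * card (T_set 2 3 m) = n" using t23 e2 e3 nx x3 unfolding x_def[symmetric] by linarith
  have h4: "2 * card (T_set 0 1 m) + 2 = n" using t01 e0 e1 nx x3 unfolding x_def[symmetric] by linarith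
  have d1: "n - card (T_set 0 3 m) = n div 2" using h1 by (metis add_diff_cancel_left' mult_2 nonzero_mult_div_cancel_left zero_neq_numeral)
  have d2: "n - card (T_set 1 2 m) = (n + 2) div 2"
  proof -
    have "n + 2 = 2 * (card (T_set 1 2 m) + 2)" using h2 by simp
    then have "(n + 2) div 2 = card (T_set 1 2 m) + 2" by simp
    then show ?thesis using h2 by simp
  qed
  have d3: "n - card (T_set 2 3 m) = n div 2" using h3 by (metis add_diff_cancel_left' mult_2 nonzero_mult_div_cancel_left zero_neq_numeral)
  have d4: "n - card (T_set 0 1 m) = (n + 2) div 2"
  proof -
    have "n + 2 = 2 * (card (T_set 0 1 m) + 2)" using h4 by simp
    then have "(n + 2) div 2 = card (T_set 0 1 m) + 2" by simp
    then show ?thesis using h4 by simp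
  qed
  show ?thesis using P[of 0 3] P[of 1 2] P[of 2 3] P[of 0 1] unfolding d1 d2 d3 d4 by blast
qed

end
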